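(* Let $u_1,\dots,u_n\in\mathbb{R}^d$ be nonzero vectors with $\langle u_i,u_j\rangle\ge0$ for all $i,j\in[n]$. Suppose there exist subsets $I,J\subseteq[n]$ such that: (i) $\mathrm{span}\{u_i:i\in I\}=\mathrm{span}\{u_j:j\in J\}=\mathrm{span}\{u_i:i\in[n]\}$; (ii) there is $i^*\in I$ with $\langle u_{i^*},u_i\rangle=0$ for all $i\in I\setminus\{i^*\}$; (iii) there is $j^*\in J$ with $\langle u_{j^*},u_j\rangle=0$ for all $j\in J\setminus\{j^*\}$; (iv) $u_{i^*}$ is not parallel to $u_{j^*}$; (v) $\langle u_{i^*},u_{j^*}\rangle\neq0$. Then for no tracial von Neumann algebra $(\mathcal{N},\tau)$ does the matrix $(\langle u_i,u_j\rangle)_{i,j\in[n]}$ admit an $\mathcal{N}^+$-factorization.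
   Context: A von Neumann algebra is a unital $*$-subalgebra of the bounded operators on a Hilbert space that is closed in the weak operator topology. It is tracial if equipped with a linear functional $\tau:\mathcal{N}\to\mathbb{C}$ such that $\tau(x^*x)\ge0$ for all $x$ and $\tau(1)=1$; $\tau(x^*x)=0$ implies $x=0$; $\tau(xy)=\tau(yx)$ for all $x,y$; and the restriction of $\tau$ to the unit ball is continuous in the weak operator topology. An element $p\in\mathcal{N}$ is positive if $p=x^*x$ for some $x\in\mathcal{N}$; $\mathcal{N}^+$ is the set of positive elements. A matrix $X$ admits an $\mathcal{N}^+$-factorization if there exist $p_1,\dots,p_n\in\mathcal{N}^+$ with $X_{ij}=\tau(p_ip_j)$ for all $i,j$. *)

theory Defs
  imports "HOL-Analysis.Analysis"
begin

text \<open>Every complex Hilbert space is unitarily isomorphic to l2(K) for some index set K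
(an orthonormal basis).  We therefore model a Hilbert space as l2 over an arbitrary index
type 'k, and a bounded operator as a function on 'k \<Rightarrow> complex that is linear and bounded on
l2, maps l2 into l2, and is (canonically) zero outside l2.\<close>

definition l2 :: "('k \<Rightarrow> complex) set" where
  "l2 = {v. (\<lambda>k. (cmod (v k))^2) summable_on UNIV}"

definition l2inner :: "('k \<Rightarrow> complex) \<Rightarrow> ('k \<Rightarrow> complex) \<Rightarrow> complex" where
  "l2inner v w = (\<Sum>\<^sub>\<infinity>k. cnj (v k) * w k)"

definition l2norm :: "('k \<Rightarrow> complex) \<Rightarrow> real" where
  "l2norm v = sqrt (\<Sum>\<^sub>\<infinity>k. (cmod (v k))^2)"

type_synonym 'k op = "('k \<Rightarrow> complex) \<Rightarrow> ('k \<Rightarrow> complex)"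

definition l2op :: "'k op \<Rightarrow> bool" where
  "l2op T \<longleftrightarrow> (\<forall>v\<in>l2. T v \<in> l2)
     \<and> (\<forall>v\<in>l2. \<forall>w\<in>l2. T (\<lambda>k. v k + w k) = (\<lambda>k. T v k + T w k))
     \<and> (\<forall>c. \<forall>v\<in>l2. T (\<lambda>k. c * v k) = (\<lambda>k. c * T v k))
     \<and> (\<exists>C. \<forall>v\<in>l2. l2norm (T v) \<le> C * l2norm v)
     \<and> (\<forall>v. v \<notin> l2 \<longrightarrow> T v = (\<lambda>k. 0))"

definition l2id :: "'k op" where
  "l2id v = (if v \<in> l2 then v else (\<lambda>k. 0))"

definition op_zero :: "'k op" where
  "op_zero = (\<lambda>v k. 0)"

definition op_add :: "'k op \<Rightarrow> 'k op \<Rightarrow> 'k op" where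
  "op_add S T = (\<lambda>v k. S v k + T v k)"

definition op_scale :: "complex \<Rightarrow> 'k op \<Rightarrow> 'k op" where
  "op_scale c T = (\<lambda>v k. c * T v k)"

definition is_adjoint :: "'k op \<Rightarrow> 'k op \<Rightarrow> bool" where
  "is_adjoint S T \<longleftrightarrow> l2op S \<and> (\<forall>v\<in>l2. \<forall>w\<in>l2. l2inner (S v) w = l2inner v (T w))"

text \<open>The Hilbert-space adjoint T* (exists and is unique for every bounded operator).\<close>
definition adj :: "'k op \<Rightarrow> 'k op" where
  "adj T = (SOME S. is_adjoint S T)"

definition contraction :: "'k op \<Rightarrow> bool" where
  "contraction T \<longleftrightarrow> (\<forall>v\<in>l2. l2norm (T v) \<le> l2norm v)"

text \<open>Basic weak-operator-topology neighbourhood of T given by finitely many pairs (v,w).\<close>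
definition wot_close :: "(('k \<Rightarrow> complex) \<times> ('k \<Rightarrow> complex)) set \<Rightarrow> real \<Rightarrow> 'k op \<Rightarrow> 'k op \<Rightarrow> bool" where
  "wot_close F \<delta> S T \<longleftrightarrow>
     (\<forall>p\<in>F. cmod (l2inner (fst p) (S (snd p)) - l2inner (fst p) (T (snd p))) < \<delta>)"

definition wot_closed :: "'k op set \<Rightarrow> bool" where
  "wot_closed N \<longleftrightarrow> (\<forall>T. l2op T \<and>
      (\<forall>F \<delta>. finite F \<and> F \<subseteq> l2 \<times> l2 \<and> \<delta> > 0 \<longrightarrow> (\<exists>S\<in>N. wot_close F \<delta> S T))
      \<longrightarrow> T \<in> N)"

definition von_neumann_algebra :: "'k op set \<Rightarrow> bool" where
  "von_neumann_algebra N \<longleftrightarrow>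
     N \<subseteq> {T. l2op T} \<and> l2id \<in> N
     \<and> (\<forall>S\<in>N. \<forall>T\<in>N. op_add S T \<in> N \<and> S \<circ> T \<in> N)
     \<and> (\<forall>c. \<forall>T\<in>N. op_scale c T \<in> N)
     \<and> (\<forall>T\<in>N. adj T \<in> N)
     \<and> wot_closed N"

definition tracial_vna :: "'k op set \<Rightarrow> ('k op \<Rightarrow> complex) \<Rightarrow> bool" where
  "tracial_vna N \<tau> \<longleftrightarrow> von_neumann_algebra N
     \<and> (\<forall>S\<in>N. \<forall>T\<in>N. \<tau> (op_add S T) = \<tau> S + \<tau> T)
     \<and> (\<forall>c. \<forall>T\<in>N. \<tau> (op_scale c T) = c * \<tau> T)
     \<and> (\<forall>x\<in>N. Im (\<tau> (adj x \<circ> x)) = 0 \<and> Re (\<tau> (adj x \<circ> x)) \<ge> 0)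
     \<and> \<tau> l2id = 1
     \<and> (\<forall>x\<in>N. \<tau> (adj x \<circ> x) = 0 \<longrightarrow> x = op_zero)
     \<and> (\<forall>x\<in>N. \<forall>y\<in>N. \<tau> (x \<circ> y) = \<tau> (y \<circ> x))
     \<and> (\<forall>T\<in>N. contraction T \<longrightarrow> (\<forall>\<epsilon>>0. \<exists>F \<delta>. finite F \<and> F \<subseteq> l2 \<times> l2 \<and> \<delta> > 0 \<and>
          (\<forall>S\<in>N. contraction S \<and> wot_close F \<delta> S T \<longrightarrow> cmod (\<tau> S - \<tau> T) < \<epsilon>)))"

definition positive_elems :: "'k op set \<Rightarrow> 'k op set" where
  "positive_elems N = {p. \<exists>x\<in>N. p = adj x \<circ> x}"

definition admits_pos_factorization :: "'k op set \<Rightarrow> ('k op \<Rightarrow> complex) \<Rightarrow> nat \<Rightarrow> (nat \<Rightarrow> nat \<Rightarrow> real) \<Rightarrow> bool" where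
  "admits_pos_factorization N \<tau> n X \<longleftrightarrow>
     (\<exists>p. (\<forall>i<n. p i \<in> positive_elems N) \<and> (\<forall>i<n. \<forall>j<n. complex_of_real (X i j) = \<tau> (p i \<circ> p j)))"

end

theory Submission
  imports Defs "HOL-Library.Function_Algebras"
begin


lemma l2_iff: "v \<in> l2 \<longleftrightarrow> (\<lambda>k. (cmod (v k))^2) summable_on UNIV"
  by (simp add: l2_def)

lemma l2_zero[simp]: "(\<lambda>k. 0) \<in> l2"
  by (simp add: l2_def)

lemma l2_add:
  assumes "v \<in> l2" "w \<in> l2" shows "(\<lambda>k. v k + w k) \<in> l2"
proof -
  have s: "(\<lambda>k. 2 * (cmod (v k))^2 + 2 * (cmod (w k))^2) summable_on UNIV"
    using assms by (intro summable_on_add summable_on_cmult_right) (auto simp: l2_def)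
  have "(cmod (a + b))^2 \<le> 2 * (cmod a)^2 + 2 * (cmod b)^2" for a b :: complex
  proof -
    have "(cmod (a + b))^2 \<le> (cmod a + cmod b)^2"
      by (simp add: norm_triangle_ineq power_mono)
    also have "\<dots> \<le> 2 * (cmod a)^2 + 2 * (cmod b)^2"
    proof -
      have "0 \<le> (cmod a - cmod b)^2" by simp
      then show ?thesis by (simp add: power2_eq_square algebra_simps)
    qed
    finally show ?thesis .
  qed
  then show ?thesis unfolding l2_iff
    by (intro summable_on_comparison_test[OF s]) auto
qed

lemma l2_scale:
  assumes "v \<in> l2" shows "(\<lambda>k. c * v k) \<in> l2"
proof -
  have "(\<lambda>k. (cmod c)^2 * (cmod (v k))^2) summable_on UNIV"
    using assms by (intro summable_on_cmult_right) (auto simp: l2_def)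
  then show ?thesis unfolding l2_def by (simp add: norm_mult power_mult_distrib)
qed

lemma l2_finite_support:
  assumes "finite F" "\<And>k. k \<notin> F \<Longrightarrow> v k = 0" shows "v \<in> l2"
proof -
  have "(\<lambda>k. (cmod (v k))^2) summable_on F" using assms by simp
  moreover have "(\<lambda>k. (cmod (v k))^2) summable_on UNIV \<longleftrightarrow> (\<lambda>k. (cmod (v k))^2) summable_on F"
    by (rule summable_on_cong_neutral) (auto simp: assms)
  ultimately show ?thesis unfolding l2_def by simp
qed

lemma norm_prod_bound: "cmod (cnj a * b) \<le> 1/2 * ((cmod a)^2 + (cmod b)^2)"
proof -
  have "0 \<le> (cmod a - cmod b)^2" by simp
  then show ?thesis by (simp add: norm_mult power2_eq_square algebra_simps)
qed

lemma l2_abs_summable: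
  assumes "v \<in> l2" "w \<in> l2" shows "(\<lambda>k. norm (cnj (v k) * w k)) summable_on UNIV"
proof -
  have s: "(\<lambda>k. 1/2 * ((cmod (v k))^2 + (cmod (w k))^2)) summable_on UNIV"
    using assms by (intro summable_on_cmult_right summable_on_add) (auto simp: l2_def)
  show ?thesis
    by (rule summable_on_comparison_test[OF s]) (rule norm_prod_bound, simp)
qed

lemma l2_summable:
  assumes "v \<in> l2" "w \<in> l2" shows "(\<lambda>k. cnj (v k) * w k) summable_on UNIV"
  by (rule abs_summable_summable) (rule l2_abs_summable[OF assms])

lemma l2inner_add_right:
  assumes "v \<in> l2" "w1 \<in> l2" "w2 \<in> l2"
  shows "l2inner v (\<lambda>k. w1 k + w2 k) = l2inner v w1 + l2inner v w2"
  unfolding l2inner_def using l2_summable[OF assms(1,2)] l2_summable[OF assms(1,3)]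
  by (simp add: distrib_left infsum_add)

lemma l2inner_scale_right:
  shows "l2inner v (\<lambda>k. c * w k) = c * l2inner v w"
  unfolding l2inner_def
  by (subst infsum_cmult_right'[symmetric]) (simp add: mult.left_commute)

lemma l2inner_cnj: "l2inner w v = cnj (l2inner v w)"
  unfolding l2inner_def by (simp flip: infsum_cnj add: mult.commute)

lemma l2inner_add_left:
  assumes "v1 \<in> l2" "v2 \<in> l2" "w \<in> l2"
  shows "l2inner (\<lambda>k. v1 k + v2 k) w = l2inner v1 w + l2inner v2 w"
  using l2inner_add_right[OF assms(3,1,2)] by (metis complex_cnj_add l2inner_cnj)

lemma l2inner_scale_left:
  shows "l2inner (\<lambda>k. c * v k) w = cnj c * l2inner v w"
  by (metis complex_cnj_mult l2inner_cnj l2inner_scale_right)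

lemma l2inner_zero_right[simp]: "l2inner v (\<lambda>k. 0) = 0"
  by (simp add: l2inner_def)
lemma l2inner_zero_left[simp]: "l2inner (\<lambda>k. 0) v = 0"
  by (simp add: l2inner_def)

lemma l2_sq_sum_nonneg: "0 \<le> (\<Sum>\<^sub>\<infinity>k. (cmod (v k))^2)"
  using infsum_nonneg[of UNIV "\<lambda>k. (cmod (v k))^2"] by simp

lemma l2inner_self:
  assumes "v \<in> l2" shows "l2inner v v = of_real ((l2norm v)^2)"
proof -
  have "l2inner v v = (\<Sum>\<^sub>\<infinity>k. of_real ((cmod (v k))^2))"
    unfolding l2inner_def by (intro infsum_cong) (simp add: complex_norm_square[symmetric] mult.commute)
  also have "\<dots> = of_real (\<Sum>\<^sub>\<infinity>k. (cmod (v k))^2)"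
    using has_sum_of_real[OF has_sum_infsum[OF assms[unfolded l2_iff]]] infsumI by blast
  moreover have "(l2norm v)^2 = (\<Sum>\<^sub>\<infinity>k. (cmod (v k))^2)"
    unfolding l2norm_def using l2_sq_sum_nonneg[of v] by simp
  ultimately show ?thesis by simp
qed

lemma l2norm_nonneg: "0 \<le> l2norm v" using l2_sq_sum_nonneg[of v] by (simp add: l2norm_def)

lemma l2norm_zero:
  assumes "v \<in> l2" "l2norm v = 0" shows "v = (\<lambda>k. 0)"
proof
  fix k
  have "(\<Sum>\<^sub>\<infinity>k. (cmod (v k))^2) = 0" using assms(2) l2_sq_sum_nonneg[of v]
    by (simp add: l2norm_def)
  then have "(cmod (v k))^2 = 0"
    using nonneg_infsum_le_0D[of "\<lambda>k. (cmod (v k))^2" UNIV k] assms(1) by (simp add: l2_def)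
  then show "v k = 0" by simp
qed

lemma cs_real:
  assumes "v \<in> l2" "w \<in> l2"
  shows "(\<Sum>\<^sub>\<infinity>k. cmod (v k) * cmod (w k)) \<le> l2norm v * l2norm w"
proof -
  define A where "A = (\<Sum>\<^sub>\<infinity>k. (cmod (v k))^2)"
  define B where "B = (\<Sum>\<^sub>\<infinity>k. (cmod (w k))^2)"
  have A0: "A \<ge> 0" "B \<ge> 0" unfolding A_def B_def by (simp_all add: l2_sq_sum_nonneg)
  have nv: "l2norm v = sqrt A" "l2norm w = sqrt B" by (simp_all add: l2norm_def A_def B_def)
  show ?thesis
  proof (cases "A = 0 \<or> B = 0")
    case True
    then have "l2norm v = 0 \<or> l2norm w = 0" using nv by auto
    then have "v = (\<lambda>k. 0) \<or> w = (\<lambda>k. 0)" using l2norm_zero assms by blast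
    then show ?thesis using nv A0 by auto
  next
    case False
    then have Ap: "A > 0" "B > 0" using A0 by auto
    define t where "t = sqrt B / sqrt A"
    have tp: "t > 0" using Ap by (simp add: t_def)
    have pt: "cmod (v k) * cmod (w k) \<le> 1/2 * (t * (cmod (v k))^2 + (1/t) * (cmod (w k))^2)" for k
    proof -
      have "0 \<le> (t * cmod (v k) - cmod (w k))^2" by simp
      then have "2 * t * (cmod (v k) * cmod (w k)) \<le> t * (t * (cmod (v k))^2 + (1/t) * (cmod (w k))^2)"
        using tp by (simp add: power2_eq_square algebra_simps)
      then show ?thesis using tp by (simp add: mult_le_cancel_left_pos)
    qed
    have sv: "(\<lambda>k. (cmod (v k))^2) summable_on UNIV" and sw: "(\<lambda>k. (cmod (w k))^2) summable_on UNIV"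
      using assms by (auto simp: l2_def)
    have s1: "(\<lambda>k. 1/2 * (t * (cmod (v k))^2 + (1/t) * (cmod (w k))^2)) summable_on UNIV"
      by (intro summable_on_cmult_right summable_on_add sv sw)
    have s2: "(\<lambda>k. cmod (v k) * cmod (w k)) summable_on UNIV"
      using l2_abs_summable[OF assms] by (simp add: norm_mult)
    have "(\<Sum>\<^sub>\<infinity>k. cmod (v k) * cmod (w k)) \<le> (\<Sum>\<^sub>\<infinity>k. 1/2 * (t * (cmod (v k))^2 + (1/t) * (cmod (w k))^2))"
      by (rule infsum_mono[OF s2 s1 pt])
    also have "\<dots> = 1/2 * (\<Sum>\<^sub>\<infinity>k. t * (cmod (v k))^2 + (1/t) * (cmod (w k))^2)"
      by (rule infsum_cmult_right) (intro summable_on_cmult_right summable_on_add sv sw)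
    also have "(\<Sum>\<^sub>\<infinity>k. t * (cmod (v k))^2 + (1/t) * (cmod (w k))^2) = 
        (\<Sum>\<^sub>\<infinity>k. t * (cmod (v k))^2) + (\<Sum>\<^sub>\<infinity>k. (1/t) * (cmod (w k))^2)"
      by (rule infsum_add) (intro summable_on_cmult_right sv sw)+
    also have "(\<Sum>\<^sub>\<infinity>k. t * (cmod (v k))^2) = t * A"
      unfolding A_def by (rule infsum_cmult_right) (rule sv)
    also have "(\<Sum>\<^sub>\<infinity>k. (1/t) * (cmod (w k))^2) = (1/t) * B"
      unfolding B_def by (rule infsum_cmult_right) (rule sw)
    finally have le: "(\<Sum>\<^sub>\<infinity>k. cmod (v k) * cmod (w k)) \<le> 1/2 * (t * A + (1/t) * B)" .
    have sA: "sqrt A * sqrt A = A" "sqrt B * sqrt B = B" using A0 by simp_all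
    have "t * A = sqrt A * sqrt B"
      using Ap unfolding t_def by (subst sA(1)[symmetric]) (simp add: field_simps)
    moreover have "(1/t) * B = sqrt A * sqrt B"
      using Ap unfolding t_def by (subst sA(2)[symmetric]) (simp add: field_simps)
    ultimately have "1/2 * (t * A + (1/t) * B) = sqrt A * sqrt B" by simp
    then show ?thesis using nv le by simp
  qed
qed

lemma cauchy_schwarz_l2:
  assumes "v \<in> l2" "w \<in> l2" shows "cmod (l2inner v w) \<le> l2norm v * l2norm w"
proof -
  have "cmod (l2inner v w) \<le> (\<Sum>\<^sub>\<infinity>k. cmod (cnj (v k) * w k))"
    unfolding l2inner_def by (rule norm_infsum_bound[OF l2_abs_summable[OF assms]])
  also have "\<dots> = (\<Sum>\<^sub>\<infinity>k. cmod (v k) * cmod (w k))" by (simp add: norm_mult)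
  also have "\<dots> \<le> l2norm v * l2norm w" by (rule cs_real[OF assms])
  finally show ?thesis .
qed




lemma l2op_in: "l2op T \<Longrightarrow> v \<in> l2 \<Longrightarrow> T v \<in> l2" by (simp add: l2op_def)
lemma l2op_add: "l2op T \<Longrightarrow> v \<in> l2 \<Longrightarrow> w \<in> l2 \<Longrightarrow> T (\<lambda>k. v k + w k) = (\<lambda>k. T v k + T w k)"
  by (simp add: l2op_def)
lemma l2op_scale: "l2op T \<Longrightarrow> v \<in> l2 \<Longrightarrow> T (\<lambda>k. c * v k) = (\<lambda>k. c * T v k)"
  by (simp add: l2op_def)
lemma l2op_out: "l2op T \<Longrightarrow> v \<notin> l2 \<Longrightarrow> T v = (\<lambda>k. 0)"
  by (simp add: l2op_def)
lemma l2op_bound: fixes T :: "'k op" assumes "l2op T" obtains C where "C \<ge> 0" "\<And>v. v \<in> l2 \<Longrightarrow> l2norm (T v) \<le> C * l2norm v"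
proof -
  obtain C where C: "\<forall>v\<in>l2. l2norm (T v) \<le> C * l2norm v" using assms by (auto simp: l2op_def)
  show ?thesis
  proof (rule that[of "max C 0"])
    fix v :: "'k \<Rightarrow> complex" assume v: "v \<in> l2"
    have "C * l2norm v \<le> max C 0 * l2norm v"
      by (rule mult_right_mono[OF _ l2norm_nonneg]) simp
    then show "l2norm (T v) \<le> max C 0 * l2norm v" using C v by fastforce
  qed simp
qed
lemma l2op_zero: "l2op T \<Longrightarrow> T (\<lambda>k. 0) = (\<lambda>k. 0)"
  using l2op_scale[of T "\<lambda>k. 0" 0] by simp

definition delta :: "'k \<Rightarrow> 'k \<Rightarrow> complex" where "delta k = (\<lambda>j. if j = k then 1 else 0)"
definition trunc :: "'k set \<Rightarrow> ('k \<Rightarrow> complex) \<Rightarrow> ('k \<Rightarrow> complex)" where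
  "trunc F w = (\<lambda>j. if j \<in> F then w j else 0)"

lemma delta_l2: "delta k \<in> l2"
  by (rule l2_finite_support[of "{k}"]) (auto simp: delta_def)
lemma trunc_l2: "finite F \<Longrightarrow> trunc F w \<in> l2"
  by (rule l2_finite_support[of F]) (auto simp: trunc_def)

lemma infsum_trunc:
  assumes "finite F" shows "(\<Sum>\<^sub>\<infinity>k. (if k \<in> F then f k else 0)) = sum f F"
proof -
  have "(\<Sum>\<^sub>\<infinity>k. (if k \<in> F then f k else 0)) = infsum f F"
    by (rule infsum_cong_neutral) auto
  then show ?thesis using assms by simp
qed

lemma trunc_sum:
  assumes T: "l2op T" and v: "v \<in> l2" and F: "finite F"
  shows "l2inner v (T (trunc F w)) = (\<Sum>k\<in>F. w k * l2inner v (T (delta k)))"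
  using F
proof (induction F rule: finite_induct)
  case empty
  have "trunc {} w = (\<lambda>k. 0)" by (simp add: trunc_def)
  then show ?case using l2op_zero[OF T] by simp
next
  case (insert k F)
  have eq: "trunc (insert k F) w = (\<lambda>j. trunc F w j + w k * delta k j)"
    using insert by (auto simp: trunc_def delta_def fun_eq_iff)
  have l: "(\<lambda>j. w k * delta k j) \<in> l2" by (rule l2_scale[OF delta_l2])
  have "T (trunc (insert k F) w) = (\<lambda>j. T (trunc F w) j + w k * T (delta k) j)"
    unfolding eq using l2op_add[OF T trunc_l2[OF insert(1)] l] l2op_scale[OF T delta_l2] by simp
  then have "l2inner v (T (trunc (insert k F) w)) = l2inner v (T (trunc F w)) + w k * l2inner v (T (delta k))"
    using l2inner_add_right[OF v l2op_in[OF T trunc_l2[OF insert(1)]] l2_scale[OF l2op_in[OF T delta_l2]]]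
      l2inner_scale_right by simp
  then show ?case using insert by simp
qed

lemma sqrt_bound_aux:
  fixes X K :: real
  assumes "0 \<le> X" "0 \<le> K" "X \<le> K * sqrt X" shows "X \<le> K^2"
proof (cases "X = 0")
  case True then show ?thesis by simp
next
  case False
  then have p: "sqrt X > 0" using assms by simp
  have "sqrt X * sqrt X \<le> K * sqrt X" using assms by simp
  then have "sqrt X \<le> K" using p by (rule mult_right_le_imp_le)
  then have "sqrt X * sqrt X \<le> K * K" using p assms(2) by (intro mult_mono) auto
  then show ?thesis using assms(1) by (simp add: power2_eq_square)
qed

lemma has_sum_phi:
  assumes T: "l2op T" and v: "v \<in> l2" and w: "w \<in> l2"
  shows "((\<lambda>k. w k * l2inner v (T (delta k))) has_sum l2inner v (T w)) UNIV"
proof -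
  obtain C where C: "C \<ge> 0" "\<And>x. x \<in> l2 \<Longrightarrow> l2norm (T x) \<le> C * l2norm x"
    using l2op_bound[OF T] by blast
  define g where "g = (\<lambda>k. (cmod (w k))^2)"
  define s where "s = infsum g UNIV"
  have gs: "g summable_on UNIV" using w by (simp add: g_def l2_def)
  have hs: "(sum g \<longlongrightarrow> s) (finite_subsets_at_top UNIV)"
    using has_sum_infsum[OF gs] by (simp add: s_def has_sum_def)
  define \<phi> where "\<phi> x = l2inner v (T x)" for x
  have bound: "norm (\<phi> (trunc F w) - \<phi> w) \<le> l2norm v * C * sqrt (s - sum g F)" if F: "finite F" for F
  proof -
    define r where "r = (\<lambda>j. w j + (-1) * trunc F w j)"
    have r: "r \<in> l2" unfolding r_def by (intro l2_add w l2_scale trunc_l2 F)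
    have "w = (\<lambda>j. trunc F w j + r j)" by (simp add: r_def fun_eq_iff)
    then have "T w = (\<lambda>j. T (trunc F w) j + T r j)"
      using l2op_add[OF T trunc_l2[OF F] r] by metis
    then have "\<phi> w = \<phi> (trunc F w) + \<phi> r"
      unfolding \<phi>_def using l2inner_add_right[OF v l2op_in[OF T trunc_l2[OF F]] l2op_in[OF T r]] by simp
    then have "norm (\<phi> (trunc F w) - \<phi> w) = norm (\<phi> r)" by (simp add: norm_minus_commute)
    also have "\<dots> \<le> l2norm v * l2norm (T r)"
      unfolding \<phi>_def by (rule cauchy_schwarz_l2[OF v l2op_in[OF T r]])
    also have "\<dots> \<le> l2norm v * (C * l2norm r)"
      by (rule mult_left_mono[OF C(2)[OF r] l2norm_nonneg])
    also have "l2norm r = sqrt (s - sum g F)"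
    proof -
      have "(\<Sum>\<^sub>\<infinity>k. (cmod (r k))^2) = infsum g (UNIV - F)"
        by (rule infsum_cong_neutral) (auto simp: r_def trunc_def g_def)
      also have "\<dots> = s - infsum g F"
        unfolding s_def by (rule infsum_Diff[OF gs]) (auto simp: F)
      finally show ?thesis using F by (simp add: l2norm_def)
    qed
    finally show ?thesis by (simp add: mult.assoc)
  qed
  have lim: "((\<lambda>F. l2norm v * C * sqrt (s - sum g F)) \<longlongrightarrow> 0) (finite_subsets_at_top UNIV)"
  proof -
    have "((\<lambda>F. l2norm v * C * sqrt (s - sum g F)) \<longlongrightarrow> l2norm v * C * sqrt (s - s)) (finite_subsets_at_top UNIV)"
      by (intro tendsto_mult_left tendsto_real_sqrt tendsto_diff tendsto_const hs)
    then show ?thesis by simp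
  qed
  have "((\<lambda>F. \<phi> (trunc F w) - \<phi> w) \<longlongrightarrow> 0) (finite_subsets_at_top UNIV)"
    by (rule Lim_null_comparison[OF _ lim]) (auto intro: bound)
  then have L: "((\<lambda>F. \<phi> (trunc F w)) \<longlongrightarrow> \<phi> w) (finite_subsets_at_top UNIV)"
    by (rule LIM_zero_cancel)
  have ev: "\<forall>\<^sub>F F in finite_subsets_at_top UNIV. \<phi> (trunc F w) = sum (\<lambda>k. w k * l2inner v (T (delta k))) F"
    by (auto simp: \<phi>_def trunc_sum[OF T v])
  show ?thesis unfolding has_sum_def using tendsto_cong[OF ev] L unfolding \<phi>_def by simp
qed

definition adjop :: "'k op \<Rightarrow> 'k op" where
  "adjop T = (\<lambda>v. if v \<in> l2 then (\<lambda>k. l2inner (T (delta k)) v) else (\<lambda>k. 0))"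

lemma adjop_inner:
  assumes T: "l2op T" and v: "v \<in> l2" and w: "w \<in> l2"
  shows "l2inner (adjop T v) w = l2inner v (T w)"
proof -
  have cj: "cnj (l2inner (T (delta k)) v) = l2inner v (T (delta k))" for k
    by (simp add: l2inner_cnj[of "T (delta k)" v])
  have av: "adjop T v = (\<lambda>k. l2inner (T (delta k)) v)" using v by (simp add: adjop_def)
  have "l2inner (adjop T v) w = (\<Sum>\<^sub>\<infinity>k. w k * l2inner v (T (delta k)))"
    unfolding av l2inner_def[of "\<lambda>k. l2inner (T (delta k)) v"]
    by (intro infsum_cong) (simp add: cj mult.commute)
  also have "\<dots> = l2inner v (T w)" by (rule infsumI[OF has_sum_phi[OF T v w]])
  finally show ?thesis .
qed

lemma adjop_l2:
  assumes T: "l2op T" and v: "v \<in> l2"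
  shows "adjop T v \<in> l2"
proof -
  obtain C where C: "C \<ge> 0" "\<And>x. x \<in> l2 \<Longrightarrow> l2norm (T x) \<le> C * l2norm x"
    using l2op_bound[OF T] by blast
  define c where "c = adjop T v"
  define K where "K = l2norm v * C"
  have K: "K \<ge> 0" unfolding K_def by (rule mult_nonneg_nonneg[OF l2norm_nonneg C(1)])
  have "sum (\<lambda>k. (cmod (c k))^2) F \<le> K^2" if F: "finite F" for F
  proof -
    define X where "X = sum (\<lambda>k. (cmod (c k))^2) F"
    have X0: "X \<ge> 0" by (simp add: X_def sum_nonneg)
    have "l2inner c (trunc F c) = (\<Sum>\<^sub>\<infinity>k. (if k \<in> F then cnj (c k) * c k else 0))"
      unfolding l2inner_def trunc_def by (intro infsum_cong) auto
    also have "\<dots> = (\<Sum>k\<in>F. cnj (c k) * c k)" by (rule infsum_trunc[OF F])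
    also have "\<dots> = of_real X" unfolding X_def of_real_sum
      by (rule sum.cong[OF refl]) (subst complex_norm_square, simp add: mult.commute)
    finally have e1: "l2inner c (trunc F c) = of_real X" .
    have "l2norm (trunc F c) = sqrt X"
    proof -
      have "(\<Sum>\<^sub>\<infinity>k. (cmod (trunc F c k))^2) = (\<Sum>\<^sub>\<infinity>k. (if k \<in> F then (cmod (c k))^2 else 0))"
        by (intro infsum_cong) (auto simp: trunc_def)
      also have "\<dots> = X" unfolding X_def by (rule infsum_trunc[OF F])
      finally show ?thesis by (simp add: l2norm_def)
    qed
    have "X = cmod (l2inner c (trunc F c))" using e1 X0 by simp
    also have "\<dots> = cmod (l2inner v (T (trunc F c)))"
      unfolding c_def by (simp add: adjop_inner[OF T v trunc_l2[OF F]])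
    also have "\<dots> \<le> l2norm v * l2norm (T (trunc F c))"
      by (rule cauchy_schwarz_l2[OF v l2op_in[OF T trunc_l2[OF F]]])
    also have "\<dots> \<le> l2norm v * (C * l2norm (trunc F c))"
      by (rule mult_left_mono[OF C(2)[OF trunc_l2[OF F]] l2norm_nonneg])
    also have "\<dots> = K * sqrt X" using \<open>l2norm (trunc F c) = sqrt X\<close> by (simp add: K_def)
    finally show ?thesis using sqrt_bound_aux[OF X0 K] by (simp add: X_def)
  qed
  then have "(\<lambda>k. (cmod (c k))^2) summable_on UNIV"
    by (intro nonneg_bdd_above_summable_on) (auto simp: bdd_above_def)
  then show ?thesis by (simp add: c_def l2_def)
qed

lemma adjop_l2op:
  assumes T: "l2op T" shows "l2op (adjop T)"
proof -
  obtain C where C: "C \<ge> 0" "\<And>x. x \<in> l2 \<Longrightarrow> l2norm (T x) \<le> C * l2norm x"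
    using l2op_bound[OF T] by blast
  have bnd: "l2norm (adjop T v) \<le> C * l2norm v" if v: "v \<in> l2" for v
  proof -
    define a where "a = l2norm (adjop T v)"
    have a0: "a \<ge> 0" by (simp add: a_def l2norm_nonneg)
    have "a^2 = cmod (l2inner (adjop T v) (adjop T v))"
      using l2inner_self[OF adjop_l2[OF T v]] by (simp add: a_def norm_power)
    also have "\<dots> = cmod (l2inner v (T (adjop T v)))" by (simp add: adjop_inner[OF T v adjop_l2[OF T v]])
    also have "\<dots> \<le> l2norm v * l2norm (T (adjop T v))"
      by (rule cauchy_schwarz_l2[OF v l2op_in[OF T adjop_l2[OF T v]]])
    also have "\<dots> \<le> l2norm v * (C * a)"
      unfolding a_def by (rule mult_left_mono[OF C(2)[OF adjop_l2[OF T v]] l2norm_nonneg])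
    finally have "a * a \<le> (C * l2norm v) * a" by (simp add: power2_eq_square algebra_simps)
    then show ?thesis using a0 C l2norm_nonneg[of v]
      by (cases "a = 0") (auto simp: a_def)
  qed
  have add: "adjop T (\<lambda>k. v k + w k) = (\<lambda>k. adjop T v k + adjop T w k)" if "v \<in> l2" "w \<in> l2" for v w
    using that l2_add[OF that] l2inner_add_right[OF l2op_in[OF T delta_l2] that]
    by (simp add: adjop_def)
  have sc: "adjop T (\<lambda>k. c * v k) = (\<lambda>k. c * adjop T v k)" if "v \<in> l2" for v c
  proof -
    have "l2inner (T (delta k)) (\<lambda>k. c * v k) = c * l2inner (T (delta k)) v" for k
      by (rule l2inner_scale_right)
    then show ?thesis using that l2_scale[OF that] by (simp add: adjop_def)
  qed
  show ?thesis unfolding l2op_def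
    using adjop_l2[OF T] add sc bnd by (auto simp: adjop_def intro!: exI[of _ C])
qed

lemma adjop_is_adjoint: "l2op T \<Longrightarrow> is_adjoint (adjop T) T"
  by (simp add: is_adjoint_def adjop_l2op adjop_inner)

lemma adjoint_unique:
  assumes "is_adjoint S1 T" "is_adjoint S2 T" shows "S1 = S2"
proof
  fix v
  have S1: "l2op S1" and S2: "l2op S2" using assms by (auto simp: is_adjoint_def)
  show "S1 v = S2 v"
  proof (cases "v \<in> l2")
    case False then show ?thesis using l2op_out[OF S1] l2op_out[OF S2] by simp
  next
    case v: True
    define d where "d = (\<lambda>k. S1 v k + (-1) * S2 v k)"
    have d: "d \<in> l2" unfolding d_def by (intro l2_add l2_scale l2op_in[OF S1 v] l2op_in[OF S2 v])
    have "l2inner d w = 0" if w: "w \<in> l2" for w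
    proof -
      have e1: "l2inner d w = l2inner (S1 v) w + l2inner (\<lambda>k. (-1) * S2 v k) w"
        unfolding d_def by (rule l2inner_add_left[OF l2op_in[OF S1 v] l2_scale[OF l2op_in[OF S2 v]] w])
      have e2: "l2inner (\<lambda>k. (-1) * S2 v k) w = cnj (-1) * l2inner (S2 v) w"
        by (rule l2inner_scale_left)
      have "l2inner d w = l2inner (S1 v) w + cnj (-1) * l2inner (S2 v) w"
        using e1 e2 by simp
      then show ?thesis using assms v w by (simp add: is_adjoint_def)
    qed
    then have "l2inner d d = 0" using d by simp
    then have "l2norm d = 0" using l2inner_self[OF d] l2norm_nonneg[of d] by simp
    then have "d = (\<lambda>k. 0)" using l2norm_zero[OF d] by simp
    then show ?thesis unfolding d_def by (simp add: fun_eq_iff)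
  qed
qed

lemma adj_is_adjoint: assumes "l2op T" shows "is_adjoint (adj T) T"
proof -
  have "\<exists>S. is_adjoint S T" using adjop_is_adjoint[OF assms] by blast
  then show ?thesis unfolding adj_def by (rule someI_ex)
qed

lemma adj_eqI: "is_adjoint S T \<Longrightarrow> l2op T \<Longrightarrow> adj T = S"
  using adj_is_adjoint adjoint_unique by blast




lemma op_add_eq: "op_add S T = S + T" by (simp add: op_add_def fun_eq_iff)
lemma op_zero_eq: "op_zero = 0" by (simp add: op_zero_def fun_eq_iff)
lemma zero_op_apply: "(0 :: 'k op) v = (\<lambda>k. 0)" by (simp add: fun_eq_iff)
lemma plus_op_apply: "((S :: 'k op) + T) v = (\<lambda>k. S v k + T v k)" by (simp add: fun_eq_iff)

lemma l2op_comp: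
  assumes A: "l2op A" and B: "l2op B" shows "l2op (A \<circ> B)"
proof -
  obtain CA where CA: "CA \<ge> 0" "\<And>x. x \<in> l2 \<Longrightarrow> l2norm (A x) \<le> CA * l2norm x"
    using l2op_bound[OF A] by blast
  obtain CB where CB: "CB \<ge> 0" "\<And>x. x \<in> l2 \<Longrightarrow> l2norm (B x) \<le> CB * l2norm x"
    using l2op_bound[OF B] by blast
  have "l2norm (A (B v)) \<le> (CA * CB) * l2norm v" if v: "v \<in> l2" for v
  proof -
    have "l2norm (A (B v)) \<le> CA * l2norm (B v)" by (rule CA(2)[OF l2op_in[OF B v]])
    also have "\<dots> \<le> CA * (CB * l2norm v)" by (rule mult_left_mono[OF CB(2)[OF v] CA(1)])
    finally show ?thesis by (simp add: mult.assoc)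
  qed
  then show ?thesis unfolding l2op_def
    using l2op_in[OF A] l2op_in[OF B] l2op_add[OF A] l2op_add[OF B] l2op_scale[OF A] l2op_scale[OF B]
      l2op_out[OF B] l2op_zero[OF A]
    by (auto intro!: exI[of _ "CA * CB"])
qed

lemma l2norm_zero_fun[simp]: "l2norm (\<lambda>k. 0) = 0" by (simp add: l2norm_def)

lemma l2op_zero_op: "l2op (0 :: 'k op)"
  unfolding l2op_def by (auto simp: fun_eq_iff zero_fun_def intro: exI[of _ 0])

lemma adj_l2op: "l2op T \<Longrightarrow> l2op (adj T)"
  using adj_is_adjoint is_adjoint_def by blast

lemma adj_inner: "l2op T \<Longrightarrow> v \<in> l2 \<Longrightarrow> w \<in> l2 \<Longrightarrow> l2inner (adj T v) w = l2inner v (T w)"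
  using adj_is_adjoint is_adjoint_def by blast

lemma adj_inner': 
  assumes "l2op T" "v \<in> l2" "w \<in> l2" shows "l2inner (T v) w = l2inner v (adj T w)"
proof -
  have "l2inner (adj T w) v = l2inner w (T v)" by (rule adj_inner[OF assms(1,3,2)])
  then show ?thesis by (metis l2inner_cnj)
qed

lemma adj_adj: assumes "l2op T" shows "adj (adj T) = T"
  by (rule adj_eqI) (auto simp: is_adjoint_def assms adj_l2op adj_inner')

lemma adj_comp:
  assumes S: "l2op S" and T: "l2op T" shows "adj (S \<circ> T) = adj T \<circ> adj S"
proof (rule adj_eqI)
  show "l2op (S \<circ> T)" by (rule l2op_comp[OF S T])
  show "is_adjoint (adj T \<circ> adj S) (S \<circ> T)"
    unfolding is_adjoint_def
    using l2op_comp[OF adj_l2op[OF T] adj_l2op[OF S]]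
    by (auto simp: adj_inner[OF T] adj_inner[OF S] l2op_in[OF adj_l2op[OF S]] l2op_in[OF T])
qed

lemma l2inner_zero_left'[simp]: "l2inner 0 v = 0" by (simp add: l2inner_def)
lemma l2inner_zero_right'[simp]: "l2inner v 0 = 0" by (simp add: l2inner_def)

lemma adj_zero: "adj (0 :: 'k op) = 0"
  by (rule adj_eqI) (auto simp: is_adjoint_def l2op_zero_op)

lemma adj_add:
  assumes S: "l2op S" and T: "l2op T" and ST: "l2op (S + T)" and aST: "l2op (adj S + adj T)"
  shows "adj (S + T) = adj S + adj T"
proof (rule adj_eqI[OF _ ST])
  show "is_adjoint (adj S + adj T) (S + T)"
    unfolding is_adjoint_def
  proof (intro conjI aST ballI)
    fix v w :: "'a \<Rightarrow> complex" assume v: "v \<in> l2" and w: "w \<in> l2"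
    have "l2inner ((adj S + adj T) v) w = l2inner (adj S v) w + l2inner (adj T v) w"
      unfolding plus_op_apply
      by (rule l2inner_add_left[OF l2op_in[OF adj_l2op[OF S] v] l2op_in[OF adj_l2op[OF T] v] w])
    also have "\<dots> = l2inner v (S w) + l2inner v (T w)"
      by (simp add: adj_inner[OF S v w] adj_inner[OF T v w])
    also have "\<dots> = l2inner v ((S + T) w)"
      unfolding plus_op_apply
      by (rule l2inner_add_right[OF v l2op_in[OF S w] l2op_in[OF T w], symmetric])
    finally show "l2inner ((adj S + adj T) v) w = l2inner v ((S + T) w)" .
  qed
qed

lemma adj_scale_real:
  assumes T: "l2op T" and cT: "l2op (op_scale (of_real c) T)"
    and caT: "l2op (op_scale (of_real c) (adj T))"
  shows "adj (op_scale (of_real c) T) = op_scale (of_real c) (adj T)"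
proof (rule adj_eqI[OF _ cT])
  show "is_adjoint (op_scale (of_real c) (adj T)) (op_scale (of_real c) T)"
    unfolding is_adjoint_def op_scale_def
    using caT[unfolded op_scale_def]
    by (auto simp: l2inner_scale_left l2inner_scale_right adj_inner[OF T])
qed

lemma comp_add_left: "((A :: 'k op) + B) \<circ> R = (A \<circ> R) + (B \<circ> R)"
  by (simp add: fun_eq_iff)

lemma comp_add_right:
  assumes R: "l2op R" and A: "l2op A" and B: "l2op B"
  shows "R \<circ> ((A :: 'k op) + B) = (R \<circ> A) + (R \<circ> B)"
proof
  fix v
  show "(R \<circ> (A + B)) v = ((R \<circ> A) + (R \<circ> B)) v"
  proof (cases "v \<in> l2")
    case True
    then show ?thesis using l2op_add[OF R l2op_in[OF A True] l2op_in[OF B True]]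
      by (simp add: plus_fun_def)
  next
    case False
    have "(A + B) v = (\<lambda>k. 0)" using l2op_out[OF A False] l2op_out[OF B False] by (simp add: plus_op_apply zero_fun_def)
    then show ?thesis using l2op_out[OF A False] l2op_out[OF B False] l2op_zero[OF R]
      by (simp add: plus_op_apply)
  qed
qed

lemma comp_scale_left: "op_scale c A \<circ> R = op_scale c (A \<circ> R)"
  by (simp add: op_scale_def fun_eq_iff)

lemma comp_scale_right:
  assumes R: "l2op R" and A: "l2op A"
  shows "R \<circ> op_scale c A = op_scale c (R \<circ> A)"
proof
  fix v
  show "(R \<circ> op_scale c A) v = op_scale c (R \<circ> A) v"
  proof (cases "v \<in> l2")
    case True
    then show ?thesis using l2op_scale[OF R l2op_in[OF A True]]
      by (simp add: op_scale_def)
  next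
    case False
    then show ?thesis using l2op_out[OF A False] l2op_zero[OF R]
      by (simp add: op_scale_def)
  qed
qed

lemma comp_zero_left: "(0 :: 'k op) \<circ> R = 0" by (simp add: fun_eq_iff)
lemma comp_zero_right: "l2op R \<Longrightarrow> R \<circ> (0 :: 'k op) = 0"
  using l2op_zero by (auto simp: fun_eq_iff zero_fun_def)

lemma op_scale_1[simp]: "op_scale 1 A = A" by (simp add: op_scale_def)
lemma op_scale_0[simp]: "op_scale 0 A = 0" by (simp add: op_scale_def fun_eq_iff)
lemma op_scale_zero[simp]: "op_scale c (0 :: 'k op) = 0" by (simp add: op_scale_def fun_eq_iff)
lemma op_scale_scale: "op_scale c (op_scale d A) = op_scale (c * d) A" by (simp add: op_scale_def mult.assoc)
lemma op_scale_add: "op_scale c ((A :: 'k op) + B) = op_scale c A + op_scale c B"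
  by (simp add: op_scale_def fun_eq_iff distrib_left)
lemma sum_op_apply: "(sum (f :: _ \<Rightarrow> 'k op) S) v k = (\<Sum>i\<in>S. f i v k)"
  by (induction S rule: infinite_finite_induct) auto

lemma op_scale_sum: "op_scale c (sum (f :: _ \<Rightarrow> 'k op) S) = (\<Sum>i\<in>S. op_scale c (f i))"
  by (simp add: fun_eq_iff op_scale_def sum_op_apply sum_distrib_left)

lemma sum_comp_left: "sum (f :: _ \<Rightarrow> 'k op) S \<circ> (R :: 'k op) = (\<Sum>i\<in>S. f i \<circ> R)"
  by (simp add: fun_eq_iff sum_op_apply[of "\<lambda>i. f i \<circ> R"] sum_op_apply[of f])

locale tv =
  fixes N :: "'k op set" and \<tau> :: "'k op \<Rightarrow> complex"
  assumes tr: "tracial_vna N \<tau>"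
begin

lemma vna: "von_neumann_algebra N" using tr by (simp add: tracial_vna_def)
lemma N_l2op: "T \<in> N \<Longrightarrow> l2op T" using vna by (auto simp: von_neumann_algebra_def)
lemma N_id: "l2id \<in> N" using vna by (auto simp: von_neumann_algebra_def)
lemma N_add: "S \<in> N \<Longrightarrow> T \<in> N \<Longrightarrow> S + T \<in> N"
  using vna by (auto simp: von_neumann_algebra_def op_add_eq)
lemma N_comp: "S \<in> N \<Longrightarrow> T \<in> N \<Longrightarrow> S \<circ> T \<in> N"
  using vna by (auto simp: von_neumann_algebra_def)
lemma N_scale: "T \<in> N \<Longrightarrow> op_scale c T \<in> N"
  using vna by (auto simp: von_neumann_algebra_def)
lemma N_adj: "T \<in> N \<Longrightarrow> adj T \<in> N"
  using vna by (auto simp: von_neumann_algebra_def)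
lemma tau_add: "S \<in> N \<Longrightarrow> T \<in> N \<Longrightarrow> \<tau> (S + T) = \<tau> S + \<tau> T"
  using tr by (auto simp: tracial_vna_def op_add_eq)
lemma tau_scale: "T \<in> N \<Longrightarrow> \<tau> (op_scale c T) = c * \<tau> T"
  using tr by (auto simp: tracial_vna_def)
lemma tau_id: "\<tau> l2id = 1"
  using tr by (auto simp: tracial_vna_def)
lemma faithful: "x \<in> N \<Longrightarrow> \<tau> (adj x \<circ> x) = 0 \<Longrightarrow> x = 0"
  using tr by (auto simp: tracial_vna_def op_zero_eq)
lemma tau_comm: "x \<in> N \<Longrightarrow> y \<in> N \<Longrightarrow> \<tau> (x \<circ> y) = \<tau> (y \<circ> x)"
  using tr by (auto simp: tracial_vna_def)

lemma N_zero: "0 \<in> N"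
  using N_scale[OF N_id, of 0] by simp
lemma tau_zero: "\<tau> 0 = 0"
  using tau_scale[OF N_id, of 0] by simp

lemma N_sum: "(\<And>i. i \<in> S \<Longrightarrow> f i \<in> N) \<Longrightarrow> sum f S \<in> N"
  by (induction S rule: infinite_finite_induct) (auto simp: N_zero N_add)
lemma tau_sum: "(\<And>i. i \<in> S \<Longrightarrow> f i \<in> N) \<Longrightarrow> \<tau> (sum f S) = (\<Sum>i\<in>S. \<tau> (f i))"
  by (induction S rule: infinite_finite_induct) (auto simp: tau_zero tau_add N_sum)
lemma comp_sum_right: "R \<in> N \<Longrightarrow> (\<And>i. i \<in> S \<Longrightarrow> f i \<in> N) \<Longrightarrow> R \<circ> sum f S = (\<Sum>i\<in>S. R \<circ> f i)"
  by (induction S rule: infinite_finite_induct)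
    (auto simp: comp_zero_right N_l2op comp_add_right N_sum)
lemma adj_sum: "(\<And>i. i \<in> S \<Longrightarrow> f i \<in> N) \<Longrightarrow> adj (sum f S) = (\<Sum>i\<in>S. adj (f i))"
  by (induction S rule: infinite_finite_induct)
    (auto simp: adj_zero N_l2op N_sum N_add N_adj adj_add)
lemma adj_scale_N: "T \<in> N \<Longrightarrow> adj (op_scale (of_real c) T) = op_scale (of_real c) (adj T)"
  by (rule adj_scale_real) (auto intro: N_l2op N_scale N_adj)
lemma adj_comp_N: "S \<in> N \<Longrightarrow> T \<in> N \<Longrightarrow> adj (S \<circ> T) = adj T \<circ> adj S"
  by (rule adj_comp) (auto intro: N_l2op)
lemma adj_adj_N: "T \<in> N \<Longrightarrow> adj (adj T) = T"
  by (rule adj_adj) (auto intro: N_l2op)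

lemma pos_N: "p \<in> positive_elems N \<Longrightarrow> p \<in> N"
  by (auto simp: positive_elems_def N_comp N_adj)
lemma pos_adj: "p \<in> positive_elems N \<Longrightarrow> adj p = p"
  by (auto simp: positive_elems_def adj_comp_N N_adj adj_adj_N)

lemma pos_orth:
  assumes p: "p \<in> positive_elems N" and q: "q \<in> positive_elems N" and t: "\<tau> (p \<circ> q) = 0"
  shows "p \<circ> q = 0"
proof -
  obtain x where x: "x \<in> N" "p = adj x \<circ> x" using p by (auto simp: positive_elems_def)
  obtain y where y: "y \<in> N" "q = adj y \<circ> y" using q by (auto simp: positive_elems_def)
  define z where "z = y \<circ> adj x"
  have zN: "z \<in> N" by (simp add: z_def N_comp y x N_adj)
  have az: "adj z = x \<circ> adj y" unfolding z_def by (simp add: adj_comp_N y x N_adj adj_adj_N)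
  have "\<tau> (adj z \<circ> z) = \<tau> (x \<circ> adj y \<circ> (y \<circ> adj x))" by (simp only: az) (simp only: z_def)
  also have "\<dots> = \<tau> (x \<circ> (adj y \<circ> y \<circ> adj x))" by (simp add: comp_assoc)
  also have "\<dots> = \<tau> ((adj y \<circ> y \<circ> adj x) \<circ> x)"
    by (rule tau_comm) (auto intro!: N_comp N_adj x y)
  also have "\<dots> = \<tau> (q \<circ> p)" by (simp add: x y comp_assoc)
  also have "\<dots> = \<tau> (p \<circ> q)" by (rule tau_comm[OF pos_N[OF q] pos_N[OF p]])
  finally have "z = 0" using faithful[OF zN] t by simp
  then have "x \<circ> adj y = 0" using az adj_zero by metis
  moreover have "p \<circ> q = adj x \<circ> ((x \<circ> adj y) \<circ> y)" by (simp add: x y comp_assoc)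
  ultimately have "p \<circ> q = adj x \<circ> 0 \<circ> y" by (simp add: comp_assoc)
  then show ?thesis by (simp add: comp_zero_right N_l2op N_adj x comp_zero_left)
qed

end



lemma sum_single:
  fixes f :: "nat \<Rightarrow> 'a::comm_monoid_add"
  assumes "m < n" "\<And>i. i < n \<Longrightarrow> i \<noteq> m \<Longrightarrow> f i = 0"
  shows "(\<Sum>i<n. f i) = f m"
proof -
  have "(\<Sum>i<n. f i) = f m + (\<Sum>i\<in>{..<n} - {m}. f i)"
    using assms(1) by (subst sum.remove[of _ m]) auto
  also have "(\<Sum>i\<in>{..<n} - {m}. f i) = 0" using assms(2) by (intro sum.neutral) auto
  finally show ?thesis by simp
qed

context tv
begin

lemma main:
  fixes u :: "nat \<Rightarrow> real ^ 'd" and p :: "nat \<Rightarrow> 'k op" and n :: nat and I J :: "nat set"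
    and istar jstar :: nat
  assumes pos: "\<forall>i<n. p i \<in> positive_elems N"
    and gram: "\<forall>i<n. \<forall>j<n. complex_of_real (u i \<bullet> u j) = \<tau> (p i \<circ> p j)"
    and nonzero: "\<forall>i<n. u i \<noteq> 0"
    and IJ: "I \<subseteq> {..<n}" "J \<subseteq> {..<n}"
    and span_I: "span (u ` I) = span (u ` {..<n})"
    and span_J: "span (u ` J) = span (u ` {..<n})"
    and istar: "istar \<in> I" "\<forall>i\<in>I - {istar}. u istar \<bullet> u i = 0"
    and jstar: "jstar \<in> J" "\<forall>j\<in>J - {jstar}. u jstar \<bullet> u j = 0"
    and not_parallel: "\<not> (\<exists>c. u istar = c *\<^sub>R u jstar)"
    and nonorth: "u istar \<bullet> u jstar \<noteq> 0"
  shows False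
proof -
  define Z where "Z c = (\<Sum>i<n. op_scale (of_real (c i)) (p i))" for c :: "nat \<Rightarrow> real"
  define V where "V c = (\<Sum>i<n. c i *\<^sub>R u i)" for c :: "nat \<Rightarrow> real"
  have pN: "p i \<in> N" if "i < n" for i using pos that pos_N by blast
  have padj: "adj (p i) = p i" if "i < n" for i using pos that pos_adj by blast
  have tN: "op_scale (of_real (c i)) (p i) \<in> N" if "i < n" for i c by (rule N_scale[OF pN[OF that]])
  have ZN: "Z c \<in> N" for c unfolding Z_def by (rule N_sum) (simp add: tN)
  have adjZ: "adj (Z c) = Z c" for c
    unfolding Z_def by (subst adj_sum) (auto simp: tN adj_scale_N pN padj)
  have compZr: "R \<circ> Z c = (\<Sum>i<n. op_scale (of_real (c i)) (R \<circ> p i))" if R: "R \<in> N" for R c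
    unfolding Z_def
    by (subst comp_sum_right[OF R]) (auto simp: tN intro!: sum.cong comp_scale_right N_l2op R pN)
  have compZl: "Z c \<circ> R = (\<Sum>i<n. op_scale (of_real (c i)) (p i \<circ> R))" for R c
    unfolding Z_def by (simp add: sum_comp_left comp_scale_left)
  have tauZZ: "\<tau> (Z c \<circ> Z d) = of_real (V c \<bullet> V d)" for c d
  proof -
    have ZZ: "Z c \<circ> Z d = (\<Sum>i<n. op_scale (of_real (c i)) (\<Sum>j<n. op_scale (of_real (d j)) (p i \<circ> p j)))"
      by (simp add: compZl compZr pN)
    have mem: "(\<Sum>j<n. op_scale (of_real (d j)) (p i \<circ> p j)) \<in> N" if "i < n" for i
      by (intro N_sum N_scale N_comp pN that) simp
    have inner: "\<tau> (\<Sum>j<n. op_scale (of_real (d j)) (p i \<circ> p j)) = (\<Sum>j<n. of_real (d j) * \<tau> (p i \<circ> p j))"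
      if "i < n" for i
    proof -
      have "\<tau> (\<Sum>j<n. op_scale (of_real (d j)) (p i \<circ> p j)) = (\<Sum>j<n. \<tau> (op_scale (of_real (d j)) (p i \<circ> p j)))"
        by (rule tau_sum) (intro N_scale N_comp pN that; simp)
      also have "\<dots> = (\<Sum>j<n. of_real (d j) * \<tau> (p i \<circ> p j))"
        by (intro sum.cong refl tau_scale N_comp pN that) simp
      finally show ?thesis .
    qed
    have "\<tau> (Z c \<circ> Z d) = (\<Sum>i<n. \<tau> (op_scale (of_real (c i)) (\<Sum>j<n. op_scale (of_real (d j)) (p i \<circ> p j))))"
      unfolding ZZ by (rule tau_sum) (intro N_scale mem; simp)
    also have "\<dots> = (\<Sum>i<n. of_real (c i) * (\<Sum>j<n. of_real (d j) * \<tau> (p i \<circ> p j)))"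
      by (intro sum.cong refl) (simp add: tau_scale mem inner)
    also have "\<dots> = (\<Sum>i<n. of_real (c i) * (\<Sum>j<n. of_real (d j) * of_real (u i \<bullet> u j)))"
      using gram by simp
    also have "\<dots> = of_real (\<Sum>i<n. c i * (\<Sum>j<n. d j * (u i \<bullet> u j)))"
      by simp
    also have "(\<Sum>i<n. c i * (\<Sum>j<n. d j * (u i \<bullet> u j))) = V c \<bullet> V d"
    proof -
      have "V c \<bullet> V d = (\<Sum>i<n. c i * (u i \<bullet> V d))" unfolding V_def[of c] by (simp add: inner_sum_left)
      also have "\<dots> = (\<Sum>i<n. c i * (\<Sum>j<n. d j * (u i \<bullet> u j)))" unfolding V_def by (simp add: inner_sum_right)
      finally show ?thesis by simp
    qed
    finally show ?thesis .
  qed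
  have Zinj: "Z c = Z d" if "V c = V d" for c d
  proof -
    define e where "e i = c i - d i" for i
    have Ve: "V e = 0" using that by (simp add: V_def e_def scaleR_diff_left sum_subtractf)
    have "\<tau> (adj (Z e) \<circ> Z e) = 0" by (simp add: adjZ tauZZ Ve)
    then have "Z e = 0" using faithful[OF ZN] by blast
    moreover have "Z e v k = Z c v k - Z d v k" for v k
      by (simp add: Z_def sum_op_apply op_scale_def e_def sum_subtractf left_diff_distrib)
    ultimately show ?thesis by (auto simp: fun_eq_iff)
  qed
  define E where "E k = (\<lambda>i. if i = k then 1 else 0 :: real)" for k :: nat
  have ZE: "Z (E k) = p k" if "k < n" for k
    unfolding Z_def E_def using that by (subst sum_single[of k]) auto
  have VE: "V (E k) = u k" if "k < n" for k
    unfolding V_def E_def using that by (subst sum_single[of k]) auto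
  have spanrep: "\<exists>a. (\<forall>i. i \<notin> K \<longrightarrow> a i = 0) \<and> V a = x" if K: "K \<subseteq> {..<n}" and x: "x \<in> span (u ` K)" for K x
    using x
  proof (induction rule: span_induct_alt)
    case base
    show ?case by (intro exI[of _ "\<lambda>i. 0"]) (simp add: V_def)
  next
    case (step c x y)
    then obtain a where a: "\<forall>i. i \<notin> K \<longrightarrow> a i = 0" "V a = y" by blast
    obtain i where i: "i \<in> K" "x = u i" using step by blast
    have "i < n" using i K by auto
    define a' where "a' j = a j + c * E i j" for j
    have "V a' = V a + c *\<^sub>R V (E i)"
      by (simp add: V_def a'_def scaleR_add_left sum.distrib scaleR_sum_right)
    then have "V a' = c *\<^sub>R x + y" using a VE[OF \<open>i < n\<close>] i by simp
    moreover have "\<forall>j. j \<notin> K \<longrightarrow> a' j = 0" using a i by (auto simp: a'_def E_def)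
    ultimately show ?case by blast
  qed
  have orth: "p i \<circ> p j = 0" if "i < n" "j < n" "u i \<bullet> u j = 0" for i j
  proof (rule pos_orth)
    show "p i \<in> positive_elems N" "p j \<in> positive_elems N" using pos that by auto
    have "complex_of_real (u i \<bullet> u j) = \<tau> (p i \<circ> p j)" using gram that by blast
    then show "\<tau> (p i \<circ> p j) = 0" using that(3) by simp
  qed
  have istar_n: "istar < n" and jstar_n: "jstar < n" using istar jstar IJ by auto
  define P where "P = p istar"
  define Q where "Q = p jstar"
  have PN: "P \<in> N" and QN: "Q \<in> N" by (simp_all add: P_def Q_def pN istar_n jstar_n)
  obtain a where a: "\<forall>i. i \<notin> I \<longrightarrow> a i = 0" "V a = u jstar"
    using spanrep[OF IJ(1), of "u jstar"] span_I jstar_n by (auto intro: span_base)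
  obtain b where b: "\<forall>i. i \<notin> J \<longrightarrow> b i = 0" "V b = u istar"
    using spanrep[OF IJ(2), of "u istar"] span_J istar_n by (auto intro: span_base)
  have QZ: "Q = Z a" using Zinj[of a "E jstar"] a ZE VE jstar_n by (simp add: Q_def)
  have PZ: "P = Z b" using Zinj[of b "E istar"] b ZE VE istar_n by (simp add: P_def)
  define \<alpha> where "\<alpha> = a istar"
  define \<beta> where "\<beta> = b jstar"
  have t1: "op_scale (of_real (a i)) (p istar \<circ> p i) = 0" "op_scale (of_real (a i)) (p i \<circ> p istar) = 0"
    if "i < n" "i \<noteq> istar" for i
  proof -
    have "a i = 0 \<or> (u istar \<bullet> u i = 0 \<and> u i \<bullet> u istar = 0)"
      using a(1) istar(2) that by (auto simp: inner_commute)
    then show "op_scale (of_real (a i)) (p istar \<circ> p i) = 0" "op_scale (of_real (a i)) (p i \<circ> p istar) = 0"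
      using orth that istar_n by auto
  qed
  have t3: "op_scale (of_real (b i)) (p i \<circ> p jstar) = 0" if "i < n" "i \<noteq> jstar" for i
  proof -
    have "b i = 0 \<or> u i \<bullet> u jstar = 0"
      using b(1) jstar(2) that by (auto simp: inner_commute)
    then show ?thesis using orth that jstar_n by auto
  qed
  have i1: "P \<circ> Q = op_scale (of_real \<alpha>) (P \<circ> P)"
    unfolding QZ compZr[OF PN] \<alpha>_def
    by (subst sum_single[OF istar_n]) (auto simp: P_def t1)
  have i2: "Q \<circ> P = op_scale (of_real \<alpha>) (P \<circ> P)"
    unfolding QZ compZl \<alpha>_def
    by (subst sum_single[OF istar_n]) (auto simp: P_def t1)
  have i3: "P \<circ> Q = op_scale (of_real \<beta>) (Q \<circ> Q)"
    unfolding PZ compZl \<beta>_def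
    by (subst sum_single[OF jstar_n]) (auto simp: Q_def t3)
  define s where "s = u istar \<bullet> u jstar"
  define ni where "ni = u istar \<bullet> u istar"
  define nj where "nj = u jstar \<bullet> u jstar"
  have tPQ: "\<tau> (P \<circ> Q) = of_real s" using gram istar_n jstar_n by (simp add: P_def Q_def s_def)
  have tPP: "\<tau> (P \<circ> P) = of_real ni" using gram istar_n by (simp add: P_def ni_def)
  have tQQ: "\<tau> (Q \<circ> Q) = of_real nj" using gram jstar_n by (simp add: Q_def nj_def)
  have sa: "s = \<alpha> * ni"
  proof -
    have "of_real s = \<tau> (op_scale (of_real \<alpha>) (P \<circ> P))" using tPQ i1 by simp
    also have "\<dots> = of_real \<alpha> * of_real ni" by (simp add: tau_scale N_comp PN tPP)
    finally show ?thesis by (metis of_real_eq_iff of_real_mult)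
  qed
  have sb: "s = \<beta> * nj"
  proof -
    have "of_real s = \<tau> (op_scale (of_real \<beta>) (Q \<circ> Q))" using tPQ i3 by simp
    also have "\<dots> = of_real \<beta> * of_real nj" by (simp add: tau_scale N_comp QN tQQ)
    finally show ?thesis by (metis of_real_eq_iff of_real_mult)
  qed
  have s0: "s \<noteq> 0" using nonorth by (simp add: s_def)
  have ni0: "ni \<noteq> 0" using nonzero istar_n by (simp add: ni_def)
  have nj0: "nj \<noteq> 0" using nonzero jstar_n by (simp add: nj_def)
  have P3: "P \<circ> P \<circ> P \<noteq> 0"
  proof
    assume P3: "P \<circ> P \<circ> P = 0"
    have P2N: "P \<circ> P \<in> N" by (simp add: N_comp PN)
    have aP2: "adj (P \<circ> P) = P \<circ> P"
      using adj_comp_N[OF PN PN] padj istar_n by (simp add: P_def)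
    have "\<tau> (adj (P \<circ> P) \<circ> (P \<circ> P)) = \<tau> (P \<circ> (P \<circ> P \<circ> P))" by (simp add: aP2 comp_assoc)
    also have "\<dots> = 0" using P3 by (simp add: comp_zero_right N_l2op PN tau_zero)
    finally have "P \<circ> P = 0" using faithful[OF P2N] by blast
    then have "\<tau> (P \<circ> P) = 0" by (simp add: tau_zero)
    then show False using tPP ni0 by simp
  qed
  have E1: "op_scale (of_real \<beta>) (Q \<circ> Q \<circ> P) = op_scale (of_real \<alpha>) (P \<circ> P \<circ> P)"
  proof -
    have "op_scale (of_real \<beta>) (Q \<circ> Q \<circ> P) = op_scale (of_real \<beta>) (Q \<circ> Q) \<circ> P"
      by (simp add: comp_scale_left)
    also have "\<dots> = op_scale (of_real \<alpha>) (P \<circ> P) \<circ> P" using i1 i3 by simp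
    also have "\<dots> = op_scale (of_real \<alpha>) (P \<circ> P \<circ> P)" by (simp add: comp_scale_left)
    finally show ?thesis .
  qed
  have E2: "Q \<circ> Q \<circ> P = op_scale (of_real (\<alpha> * \<alpha>)) (P \<circ> P \<circ> P)"
  proof -
    have "Q \<circ> Q \<circ> P = Q \<circ> (Q \<circ> P)" by (simp add: comp_assoc)
    also have "\<dots> = Q \<circ> op_scale (of_real \<alpha>) (P \<circ> P)" by (simp add: i2)
    also have "\<dots> = op_scale (of_real \<alpha>) (Q \<circ> (P \<circ> P))"
      by (rule comp_scale_right) (auto intro: N_l2op N_comp PN QN)
    also have "Q \<circ> (P \<circ> P) = (Q \<circ> P) \<circ> P" by (simp add: comp_assoc)
    also have "\<dots> = op_scale (of_real \<alpha>) (P \<circ> P \<circ> P)" by (simp add: i2 comp_scale_left)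
    finally show ?thesis by (simp only: op_scale_scale of_real_mult)
  qed
  have "op_scale (of_real (\<beta> * (\<alpha> * \<alpha>))) (P \<circ> P \<circ> P) = op_scale (of_real \<alpha>) (P \<circ> P \<circ> P)"
    using E1 E2 by (simp add: op_scale_scale)
  moreover obtain v k where vk: "(P \<circ> P \<circ> P) v k \<noteq> 0" using P3 by (auto simp: fun_eq_iff)
  ultimately have "of_real (\<beta> * (\<alpha> * \<alpha>)) * (P \<circ> P \<circ> P) v k = of_real \<alpha> * (P \<circ> P \<circ> P) v k"
    by (metis op_scale_def)
  then have "of_real (\<beta> * (\<alpha> * \<alpha>)) = (of_real \<alpha> :: complex)" using vk by simp
  then have ba: "\<beta> * (\<alpha> * \<alpha>) = \<alpha>" by (metis of_real_eq_iff)
  have a0: "\<alpha> \<noteq> 0" using sa s0 by auto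
  have "(\<alpha> * \<beta>) * \<alpha> = 1 * \<alpha>" using ba by (simp add: mult_ac)
  then have ab: "\<alpha> * \<beta> = 1" using a0 mult_right_cancel by blast
  have "s * s = (\<alpha> * ni) * (\<beta> * nj)" using sa sb by metis
  also have "\<dots> = (\<alpha> * \<beta>) * (ni * nj)" by (simp add: mult_ac)
  finally have ss: "s * s = ni * nj" using ab by simp
  have nn: "ni = (norm (u istar))^2" "nj = (norm (u jstar))^2"
    by (simp_all add: ni_def nj_def power2_norm_eq_inner)
  have "\<bar>s\<bar> = norm (u istar) * norm (u jstar)"
  proof -
    have "\<bar>s\<bar>^2 = (norm (u istar) * norm (u jstar))^2"
      using ss nn by (simp add: power2_eq_square power_mult_distrib)
    then have "sqrt (\<bar>s\<bar>^2) = sqrt ((norm (u istar) * norm (u jstar))^2)" by simp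
    then show ?thesis by (simp only: real_sqrt_abs abs_abs abs_mult abs_norm_cancel)
  qed
  then have cs: "norm (u istar) *\<^sub>R u jstar = norm (u jstar) *\<^sub>R u istar \<or>
      norm (u istar) *\<^sub>R u jstar = - (norm (u jstar) *\<^sub>R u istar)"
    using norm_cauchy_schwarz_abs_eq[of "u istar" "u jstar"] by (simp add: s_def)
  have nj': "norm (u jstar) \<noteq> 0" using nonzero jstar_n by simp
  from cs show False
  proof
    assume h: "norm (u istar) *\<^sub>R u jstar = norm (u jstar) *\<^sub>R u istar"
    have "u istar = (1 / norm (u jstar)) *\<^sub>R (norm (u jstar) *\<^sub>R u istar)" using nj' by simp
    also have "\<dots> = (1 / norm (u jstar)) *\<^sub>R (norm (u istar) *\<^sub>R u jstar)" using h by simp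
    also have "\<dots> = (norm (u istar) / norm (u jstar)) *\<^sub>R u jstar" by simp
    finally show False using not_parallel by blast
  next
    assume h: "norm (u istar) *\<^sub>R u jstar = - (norm (u jstar) *\<^sub>R u istar)"
    have "u istar = (- 1 / norm (u jstar)) *\<^sub>R (- (norm (u jstar) *\<^sub>R u istar))" using nj' by simp
    also have "\<dots> = (- 1 / norm (u jstar)) *\<^sub>R (norm (u istar) *\<^sub>R u jstar)" using h by simp
    also have "\<dots> = (- norm (u istar) / norm (u jstar)) *\<^sub>R u jstar" by simp
    finally show False using not_parallel by blast
  qed
qed

end

theorem theorem6p2:
  fixes u :: "nat \<Rightarrow> real ^ 'd" and n :: nat and I J :: "nat set"
    and istar jstar :: nat
  assumes nonzero: "\<forall>i<n. u i \<noteq> 0"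
    and nonneg: "\<forall>i<n. \<forall>j<n. u i \<bullet> u j \<ge> 0"
    and IJ: "I \<subseteq> {..<n}" "J \<subseteq> {..<n}"
    and span_I: "span (u ` I) = span (u ` {..<n})"
    and span_J: "span (u ` J) = span (u ` {..<n})"
    and istar: "istar \<in> I" "\<forall>i\<in>I - {istar}. u istar \<bullet> u i = 0"
    and jstar: "jstar \<in> J" "\<forall>j\<in>J - {jstar}. u jstar \<bullet> u j = 0"
    and not_parallel: "\<not> (\<exists>c. u istar = c *\<^sub>R u jstar)"
    and nonorth: "u istar \<bullet> u jstar \<noteq> 0"
  shows "\<not> (\<exists>(N :: 'k op set) \<tau>. tracial_vna N \<tau> \<and>
             admits_pos_factorization N \<tau> n (\<lambda>i j. u i \<bullet> u j))"
proof
  assume "\<exists>(N :: 'k op set) \<tau>. tracial_vna N \<tau> \<and>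
             admits_pos_factorization N \<tau> n (\<lambda>i j. u i \<bullet> u j)"
  then obtain N :: "'k op set" and \<tau> where tr: "tracial_vna N \<tau>"
    and f: "admits_pos_factorization N \<tau> n (\<lambda>i j. u i \<bullet> u j)" by blast
  from f obtain p where p: "\<forall>i<n. p i \<in> positive_elems N"
    "\<forall>i<n. \<forall>j<n. complex_of_real (u i \<bullet> u j) = \<tau> (p i \<circ> p j)"
    unfolding admits_pos_factorization_def by blast
  interpret tv N \<tau> by (rule tv.intro[OF tr])
  show False
    by (rule main[OF p(1) p(2) nonzero IJ span_I span_J istar jstar not_parallel nonorth])
qed

end
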